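(* Let $R$ be a commutative ring, let $I$ be a 2-absorbing ideal of $R$, let $J$ be an ideal of $R$, and let $x,y\in R$ satisfy $xyJ\subseteq I$. Then $xy\in I$ or $xJ\subseteq I$ or $yJ\subseteq I$.
   Context: All rings are commutative with identity $1\neq 0$. An ideal $I$ of $R$ is 2-absorbing if whenever $a,b,c\in R$ and $abc\in I$, then $ab\in I$ or $ac\in I$ or $bc\in I$. *)

theory Defs
  imports "HOL-Algebra.Ideal"
begin

definition two_absorbing :: "('a, 'b) ring_scheme \<Rightarrow> 'a set \<Rightarrow> bool" where
  "two_absorbing R I \<longleftrightarrow> ideal I R \<and>
     (\<forall>a\<in>carrier R. \<forall>b\<in>carrier R. \<forall>c\<in>carrier R.
        a \<otimes>\<^bsub>R\<^esub> b \<otimes>\<^bsub>R\<^esub> c \<in> I \<longrightarrow>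
        a \<otimes>\<^bsub>R\<^esub> b \<in> I \<or> a \<otimes>\<^bsub>R\<^esub> c \<in> I \<or> b \<otimes>\<^bsub>R\<^esub> c \<in> I)"

end

theory Submission
  imports Defs
begin

lemma ideal_cancel:
  assumes "cring R" "ideal I R" "a \<in> carrier R" "b \<in> carrier R"
    "a \<oplus>\<^bsub>R\<^esub> b \<in> I" "b \<in> I"
  shows "a \<in> I"
proof -
  interpret cring R by fact
  interpret ideal I R by fact
  have "\<ominus>\<^bsub>R\<^esub> b \<in> I" using assms(6) by (rule a_inv_closed)
  hence "(a \<oplus>\<^bsub>R\<^esub> b) \<oplus>\<^bsub>R\<^esub> \<ominus>\<^bsub>R\<^esub> b \<in> I" by (rule a_closed[OF assms(5)])
  moreover have "(a \<oplus>\<^bsub>R\<^esub> b) \<oplus>\<^bsub>R\<^esub> \<ominus>\<^bsub>R\<^esub> b = a"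
      proof -
    have "(a \<oplus>\<^bsub>R\<^esub> b) \<oplus>\<^bsub>R\<^esub> \<ominus>\<^bsub>R\<^esub> b = a \<oplus>\<^bsub>R\<^esub> (b \<oplus>\<^bsub>R\<^esub> \<ominus>\<^bsub>R\<^esub> b)"
      using assms(3,4) by (simp add: a_assoc)
    also have "b \<oplus>\<^bsub>R\<^esub> \<ominus>\<^bsub>R\<^esub> b = \<zero>\<^bsub>R\<^esub>" using assms(4) by (rule r_neg)
    finally show ?thesis using assms(3) by simp
  qed
  ultimately show ?thesis by simp
qed

theorem lemma2:
  fixes R (structure)
  assumes "cring R" and "\<one> \<noteq> \<zero>"
    and "two_absorbing R I"
    and "ideal J R"
    and "x \<in> carrier R" and "y \<in> carrier R"
    and "\<forall>j\<in>J. x \<otimes> y \<otimes> j \<in> I"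
  shows "x \<otimes> y \<in> I \<or> (\<forall>j\<in>J. x \<otimes> j \<in> I) \<or> (\<forall>j\<in>J. y \<otimes> j \<in> I)"
proof (rule ccontr)
  interpret cring R by fact
  interpret J: ideal J R by fact
  have I: "ideal I R" using assms(3) unfolding two_absorbing_def by (rule conjunct1)
  interpret I: ideal I R by fact
  have abs: "\<And>a b c. a \<in> carrier R \<Longrightarrow> b \<in> carrier R \<Longrightarrow> c \<in> carrier R \<Longrightarrow>
     a \<otimes> b \<otimes> c \<in> I \<Longrightarrow> a \<otimes> b \<in> I \<or> a \<otimes> c \<in> I \<or> b \<otimes> c \<in> I"
    using assms(3) unfolding two_absorbing_def by (meson conjunct2)
  assume "\<not> ?thesis"
  then obtain j1 j2 where xy: "x \<otimes> y \<notin> I" and j1: "j1 \<in> J" "x \<otimes> j1 \<notin> I"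
    and j2: "j2 \<in> J" "y \<otimes> j2 \<notin> I" by blast
  have c1: "j1 \<in> carrier R" "j2 \<in> carrier R" using j1 j2 J.a_subset by auto
  have "x \<otimes> y \<otimes> j1 \<in> I" using assms(7) j1(1) by (rule bspec)
  hence yj1: "y \<otimes> j1 \<in> I" using abs[OF assms(5,6) c1(1)] j1 xy by blast
  have "x \<otimes> y \<otimes> j2 \<in> I" using assms(7) j2(1) by (rule bspec)
  hence xj2: "x \<otimes> j2 \<in> I" using abs[OF assms(5,6) c1(2)] j2 xy by blast
  have s: "j1 \<oplus> j2 \<in> J" using j1 j2 J.a_closed by blast
  have sc: "j1 \<oplus> j2 \<in> carrier R" using c1 by simp
  have "x \<otimes> y \<otimes> (j1 \<oplus> j2) \<in> I" using assms(7) s by (rule bspec)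
  with abs[OF assms(5,6) sc] xy
  have "x \<otimes> (j1 \<oplus> j2) \<in> I \<or> y \<otimes> (j1 \<oplus> j2) \<in> I" by blast
  thus False
  proof
    assume "x \<otimes> (j1 \<oplus> j2) \<in> I"
    hence "x \<otimes> j1 \<oplus> x \<otimes> j2 \<in> I" using c1 assms(5) by (simp add: r_distr)
    hence "x \<otimes> j1 \<in> I" using ideal_cancel[OF assms(1) I, of "x \<otimes> j1" "x \<otimes> j2"] xj2 c1 assms(5) by blast
    thus False using j1 by simp
  next
    assume "y \<otimes> (j1 \<oplus> j2) \<in> I"
    hence "y \<otimes> j2 \<oplus> y \<otimes> j1 \<in> I" using c1 assms(6) by (simp add: r_distr add.m_comm)
    hence "y \<otimes> j2 \<in> I" using ideal_cancel[OF assms(1) I, of "y \<otimes> j2" "y \<otimes> j1"] yj1 c1 assms(6) by blast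
    thus False using j2 by simp
  qed
qed

end
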